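(* Let $V$ be a manifold (not necessarily Hausdorff) with a regular $C^r$-differentiable structure, $r\geq 1$. If a real-valued $C^r$ function $f$ on $V$ is of rank $1$ at a point $x\in V$, then $f$ is also of rank $1$ at every point $y\in V$ which is not separated from $x$.
   Context: A $C^r$-differentiable structure ($r$ a positive integer or $\infty$) on an $n$-dimensional (not necessarily Hausdorff) manifold $V$ is given by an atlas of charts $h_i:\mathbb{R}^n\to V$ (homeomorphisms onto open sets covering $V$) whose transition maps $h_j^{-1}h_i$ are $C^r$ homeomorphisms between open subsets of $\mathbb{R}^n$. A function $f:V\to\mathbb{R}$ (or defined on an open subset) is $C^r$ if $f h_i$ is $C^r$ for every chart $h_i$ of the atlas; it is of rank $1$ at $x$ if for a chart $h_i$ whose image contains $x$, $f h_i$ has a nonzero partial derivative at $h_i^{-1}(x)$ (independent of the chart). The structure is regular if for every $x\in V$ and every $C^r$ function $f$ defined on a neighborhood of $x$, there is a $C^r$ function $f'$ defined on all of $V$ coinciding with $f$ on a neighborhood of $x$. Two points $x,y$ are not separated if every neighborhood of $x$ meets every neighborhood of $y$. *)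

theory Defs
  imports "HOL-Analysis.Analysis" "HOL-Library.Extended_Nat"
begin

definition has_partial_deriv :: "(real^'n \<Rightarrow> real) \<Rightarrow> 'n \<Rightarrow> real^'n \<Rightarrow> real \<Rightarrow> bool" where
  "has_partial_deriv g i u d \<longleftrightarrow>
     ((\<lambda>t. g (u + t *\<^sub>R axis i 1)) has_real_derivative d) (at 0)"

primrec Ck_on :: "nat \<Rightarrow> (real^'n) set \<Rightarrow> (real^'n \<Rightarrow> real) \<Rightarrow> bool" where
  "Ck_on 0 S g = continuous_on S g"
| "Ck_on (Suc k) S g = (continuous_on S g \<and>
     (\<forall>i. \<exists>g'. (\<forall>u\<in>S. has_partial_deriv g i u (g' u)) \<and> Ck_on k S g'))"

definition Cr_on :: "enat \<Rightarrow> (real^'n) set \<Rightarrow> (real^'n \<Rightarrow> real) \<Rightarrow> bool" where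
  "Cr_on r S g \<longleftrightarrow> (\<forall>k. enat k \<le> r \<longrightarrow> Ck_on k S g)"

definition Cr_map_on :: "enat \<Rightarrow> (real^'n) set \<Rightarrow> (real^'n \<Rightarrow> real^'n) \<Rightarrow> bool" where
  "Cr_map_on r S \<tau> \<longleftrightarrow> (\<forall>j. Cr_on r S (\<lambda>u. \<tau> u $ j))"

definition is_chart :: "'a topology \<Rightarrow> (real^'n \<Rightarrow> 'a) \<Rightarrow> bool" where
  "is_chart V h \<longleftrightarrow> openin V (range h) \<and>
     homeomorphic_map euclidean (subtopology V (range h)) h"

text \<open>Transition map h_j^{-1} h_i, defined on h_i^{-1}(h_j(R^n)).\<close>
definition transition :: "(real^'n \<Rightarrow> 'a) \<Rightarrow> (real^'n \<Rightarrow> 'a) \<Rightarrow> real^'n \<Rightarrow> real^'n" where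
  "transition hi hj = (\<lambda>u. inv hj (hi u))"

definition Cr_structure :: "'a topology \<Rightarrow> (real^'n \<Rightarrow> 'a) set \<Rightarrow> enat \<Rightarrow> bool" where
  "Cr_structure V A r \<longleftrightarrow>
     (\<forall>h\<in>A. is_chart V h) \<and>
     (\<Union>h\<in>A. range h) = topspace V \<and>
     (\<forall>hi\<in>A. \<forall>hj\<in>A. Cr_map_on r (hi -` range hj) (transition hi hj))"

definition Cr_fun_on :: "(real^'n \<Rightarrow> 'a) set \<Rightarrow> enat \<Rightarrow> 'a set \<Rightarrow> ('a \<Rightarrow> real) \<Rightarrow> bool" where
  "Cr_fun_on A r U f \<longleftrightarrow> (\<forall>h\<in>A. Cr_on r (h -` U) (f \<circ> h))"

definition rank1_at :: "(real^'n \<Rightarrow> 'a) set \<Rightarrow> ('a \<Rightarrow> real) \<Rightarrow> 'a \<Rightarrow> bool" where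
  "rank1_at A f x \<longleftrightarrow> (\<exists>h\<in>A. x \<in> range h \<and>
      (\<exists>i d. has_partial_deriv (f \<circ> h) i (inv h x) d \<and> d \<noteq> 0))"

definition regular_structure :: "'a topology \<Rightarrow> (real^'n \<Rightarrow> 'a) set \<Rightarrow> enat \<Rightarrow> bool" where
  "regular_structure V A r \<longleftrightarrow>
     (\<forall>x\<in>topspace V. \<forall>U f. openin V U \<and> x \<in> U \<and> Cr_fun_on A r U f \<longrightarrow>
        (\<exists>f'. Cr_fun_on A r (topspace V) f' \<and>
              (\<exists>W. openin V W \<and> x \<in> W \<and> W \<subseteq> U \<and> (\<forall>z\<in>W. f' z = f z))))"

definition not_separated :: "'a topology \<Rightarrow> 'a \<Rightarrow> 'a \<Rightarrow> bool" where
  "not_separated V x y \<longleftrightarrow>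
     (\<forall>U W. openin V U \<and> x \<in> U \<and> openin V W \<and> y \<in> W \<longrightarrow> U \<inter> W \<noteq> {})"

end

theory Submission
  imports Defs
begin


lemma mvt_abs:
  fixes \<phi> \<phi>' :: "real \<Rightarrow> real"
  assumes "\<And>t. (\<phi> has_real_derivative \<phi>' t) (at t)"
    and "\<And>t. min 0 c \<le> t \<Longrightarrow> t \<le> max 0 c \<Longrightarrow> \<bar>\<phi>' t\<bar> \<le> e"
  shows "\<bar>\<phi> c - \<phi> 0\<bar> \<le> e * \<bar>c\<bar>"
proof (cases "c = 0")
  case True then show ?thesis by simp
next
  case False
  show ?thesis
  proof (cases "c > 0")
    case True
    from MVT2[OF True, of \<phi> \<phi>'] assms(1) obtain z where z: "0 < z" "z < c" "\<phi> c - \<phi> 0 = (c - 0) * \<phi>' z" by blast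
    have "\<bar>\<phi>' z\<bar> \<le> e" using assms(2)[of z] z True by simp
    then show ?thesis using z True by (simp add: abs_mult mult.commute mult_left_mono)
  next
    case False
    then have c: "c < 0" using \<open>c \<noteq> 0\<close> by simp
    from MVT2[OF c, of \<phi> \<phi>'] assms(1) obtain z where z: "c < z" "z < 0" "\<phi> 0 - \<phi> c = (0 - c) * \<phi>' z" by blast
    have "\<bar>\<phi>' z\<bar> \<le> e" using assms(2)[of z] z c by simp
    then have "\<bar>\<phi> 0 - \<phi> c\<bar> \<le> e * \<bar>c\<bar>" using z c by (simp add: abs_mult mult.commute mult_left_mono)
    then show ?thesis by (simp add: abs_minus_commute)
  qed
qed

lemma box_est:
  fixes F :: "real^'n \<Rightarrow> real" and F' :: "'n \<Rightarrow> real^'n \<Rightarrow> real"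
  assumes der: "\<And>j w. has_partial_deriv F j w (F' j w)"
   and bd: "\<And>j w. (\<forall>l. \<bar>w$l - b$l\<bar> < \<eta>) \<Longrightarrow> \<bar>F' j w\<bar> \<le> \<epsilon>"
   and p: "\<forall>l. \<bar>p$l - b$l\<bar> < \<eta>" and q: "\<forall>l. \<bar>q$l - b$l\<bar> < \<eta>"
  shows "\<bar>F p - F q\<bar> \<le> \<epsilon> * (\<Sum>j\<in>UNIV. \<bar>p$j - q$j\<bar>)"
proof -
  define mix where "mix S = (\<chi> l. if l \<in> S then p$l else q$l)" for S
  have "finite S \<Longrightarrow> \<bar>F (mix S) - F q\<bar> \<le> \<epsilon> * (\<Sum>j\<in>S. \<bar>p$j - q$j\<bar>)" for S
  proof (induction S rule: finite_induct)
    case empty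
    have "mix {} = q" by (simp add: mix_def vec_eq_iff)
    then show ?case by simp
  next
    case (insert j S)
    define c where "c = p$j - q$j"
    have m': "mix (insert j S) = mix S + c *\<^sub>R axis j 1"
      using insert.hyps by (auto simp: mix_def vec_eq_iff axis_def c_def)
    define \<phi> where "\<phi> t = F (mix S + t *\<^sub>R axis j 1)" for t
    have d: "(\<phi> has_real_derivative F' j (mix S + t *\<^sub>R axis j 1)) (at t)" for t
    proof -
      have "((\<lambda>s. F (mix S + t *\<^sub>R axis j 1 + s *\<^sub>R axis j 1)) has_real_derivative F' j (mix S + t *\<^sub>R axis j 1)) (at 0)"
        using der[of j "mix S + t *\<^sub>R axis j 1"] by (simp add: has_partial_deriv_def)
      moreover have "(\<lambda>s. \<phi> (s + t)) = (\<lambda>s. F (mix S + t *\<^sub>R axis j 1 + s *\<^sub>R axis j 1))"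
        by (rule ext) (simp add: \<phi>_def scaleR_add_left algebra_simps)
      ultimately have "((\<lambda>s. \<phi> (s + t)) has_real_derivative F' j (mix S + t *\<^sub>R axis j 1)) (at 0)"
        by simp
      then show ?thesis using DERIV_shift[of \<phi> _ 0 t] by simp
    qed
    have "\<bar>\<phi> c - \<phi> 0\<bar> \<le> \<epsilon> * \<bar>c\<bar>"
    proof (rule mvt_abs[OF d])
      fix t assume t: "min 0 c \<le> t" "t \<le> max 0 c"
      have "\<forall>l. \<bar>(mix S + t *\<^sub>R axis j 1)$l - b$l\<bar> < \<eta>"
      proof
        fix l
        show "\<bar>(mix S + t *\<^sub>R axis j 1)$l - b$l\<bar> < \<eta>"
        proof (cases "l = j")
          case True
          have "(mix S + t *\<^sub>R axis j 1)$l = q$j + t" using True insert.hyps by (simp add: mix_def axis_def)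
          moreover have "\<bar>p$j - b$j\<bar> < \<eta>" "\<bar>q$j - b$j\<bar> < \<eta>" using p q by auto
          ultimately show ?thesis using t True unfolding c_def by (auto simp: abs_less_iff min_def max_def split: if_splits)
        next
          case False
          then show ?thesis using p q by (simp add: mix_def axis_def)
        qed
      qed
      then show "\<bar>F' j (mix S + t *\<^sub>R axis j 1)\<bar> \<le> \<epsilon>" by (rule bd)
    qed
    then have "\<bar>F (mix (insert j S)) - F (mix S)\<bar> \<le> \<epsilon> * \<bar>p$j - q$j\<bar>"
      by (simp add: \<phi>_def m' c_def)
    with insert.IH show ?case using insert.hyps by (simp add: algebra_simps)
  qed
  from this[of UNIV] show ?thesis by (simp add: mix_def)
qed

lemma deriv_est:
  fixes \<phi> :: "real \<Rightarrow> real" and \<psi> :: "'n::finite \<Rightarrow> real \<Rightarrow> real"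
  assumes d1: "(\<phi> has_real_derivative D) (at 0)" and d2: "\<And>j. (\<psi> j has_real_derivative E j) (at 0)"
   and ev: "eventually (\<lambda>t. \<bar>\<phi> t - \<phi> 0\<bar> \<le> e * (\<Sum>j\<in>UNIV. \<bar>\<psi> j t - \<psi> j 0\<bar>)) (at 0)"
  shows "\<bar>D\<bar> \<le> e * (\<Sum>j\<in>UNIV. \<bar>E j\<bar>)"
proof -
  have l1: "((\<lambda>t. \<bar>(\<phi> t - \<phi> 0) / t\<bar>) \<longlongrightarrow> \<bar>D\<bar>) (at 0)"
    using d1 unfolding has_field_derivative_iff by (intro tendsto_rabs) simp
  have l2: "((\<lambda>t. e * (\<Sum>j\<in>UNIV. \<bar>(\<psi> j t - \<psi> j 0) / t\<bar>)) \<longlongrightarrow> e * (\<Sum>j\<in>UNIV. \<bar>E j\<bar>)) (at 0)"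
  proof (intro tendsto_intros)
    fix j show "((\<lambda>t. (\<psi> j t - \<psi> j 0) / t) \<longlongrightarrow> E j) (at 0)"
      using d2[of j] unfolding has_field_derivative_iff by simp
  qed
  have ev2: "eventually (\<lambda>t. \<bar>(\<phi> t - \<phi> 0) / t\<bar> \<le> e * (\<Sum>j\<in>UNIV. \<bar>(\<psi> j t - \<psi> j 0) / t\<bar>)) (at 0)"
    using ev eventually_neq_at_within[of 0 0 UNIV]
  proof (eventually_elim)
    case (elim t)
    then have tp: "\<bar>t\<bar> > 0" by simp
    have "\<bar>(\<phi> t - \<phi> 0) / t\<bar> = \<bar>\<phi> t - \<phi> 0\<bar> / \<bar>t\<bar>" by (simp add: abs_divide)
    also have "\<dots> \<le> e * (\<Sum>j\<in>UNIV. \<bar>\<psi> j t - \<psi> j 0\<bar>) / \<bar>t\<bar>"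
      using elim tp by (simp add: divide_right_mono)
    also have "\<dots> = e * (\<Sum>j\<in>UNIV. \<bar>(\<psi> j t - \<psi> j 0) / t\<bar>)"
      by (simp add: abs_divide sum_divide_distrib[symmetric])
    finally show ?case .
  qed
  show ?thesis by (rule tendsto_le[OF _ l2 l1 ev2]) simp
qed



lemma chart_facts:
  assumes "is_chart V h"
  shows "continuous_map euclidean V h" "inj h" "range h \<subseteq> topspace V"
    "\<And>S. open S \<Longrightarrow> openin V (h ` S)"
proof -
  have o: "openin V (range h)" and hm: "homeomorphic_map euclidean (subtopology V (range h)) h"
    using assms unfolding is_chart_def by auto
  show "continuous_map euclidean V h"
    using homeomorphic_imp_continuous_map[OF hm] unfolding continuous_map_in_subtopology by (rule conjunct1)
  show "inj h" using homeomorphic_imp_injective_map[OF hm] by simp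
  show "range h \<subseteq> topspace V" using openin_subset[OF o] .
  fix S :: "(real^'b) set" assume "open S"
  then have "openin euclidean S" by (simp only: open_openin)
  then have "openin (subtopology V (range h)) (h ` S)"
    using homeomorphic_imp_open_map[OF hm] unfolding open_map_def by blast
  then show "openin V (h ` S)" using openin_trans_full o by metis
qed
lemma C1_partial:
  assumes "Cr_on r S g" "r \<ge> 1"
  shows "continuous_on S g" "\<exists>g'. (\<forall>u\<in>S. has_partial_deriv g i u (g' u)) \<and> continuous_on S g'"
proof -
  have "enat 1 \<le> r" using assms(2) by (simp add: one_enat_def)
  then have "Ck_on (Suc 0) S g" using assms(1) unfolding Cr_on_def One_nat_def by blast
  then show "continuous_on S g" "\<exists>g'. (\<forall>u\<in>S. has_partial_deriv g i u (g' u)) \<and> continuous_on S g'"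
    by simp_all
qed


lemma cont_tendsto:
  fixes g :: "real^'n \<Rightarrow> real"
  assumes "continuous_on UNIV g"
  shows "(g \<longlongrightarrow> g a) (at a)"
  using assms by (simp add: continuous_on_eq_continuous_at continuous_at)

theorem lemma2:
  fixes V :: "'a topology" and A :: "(real^'n \<Rightarrow> 'a) set" and r :: enat
    and f :: "'a \<Rightarrow> real" and x y :: 'a
  assumes "Cr_structure V A r" and "r \<ge> 1" and "regular_structure V A r"
    and "Cr_fun_on A r (topspace V) f"
    and "x \<in> topspace V" and "rank1_at A f x"
    and "y \<in> topspace V" and "not_separated V x y"
  shows "rank1_at A f y"
proof (rule ccontr)
  assume ny: "\<not> rank1_at A f y"
  have charts: "\<forall>h\<in>A. is_chart V h" and cover: "(\<Union>h\<in>A. range h) = topspace V"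
    and trans: "\<forall>hi\<in>A. \<forall>hj\<in>A. Cr_map_on r (hi -` range hj) (transition hi hj)"
    using assms(1) unfolding Cr_structure_def by auto
  obtain h i d where h: "h \<in> A" "x \<in> range h"
    and hd: "has_partial_deriv (f \<circ> h) i (inv h x) d" "d \<noteq> 0"
    using assms(6) unfolding rank1_at_def by blast
  obtain k where k: "k \<in> A" "y \<in> range k" using cover assms(7) by (metis UN_E)
  define a where "a = inv h x"
  define b where "b = inv k y"
  have hc: "continuous_map euclidean V h" "inj h" "range h \<subseteq> topspace V"
    "\<And>S. open S \<Longrightarrow> openin V (h ` S)" using chart_facts[OF bspec[OF charts h(1)]] by blast+
  have kc: "continuous_map euclidean V k" "inj k" "range k \<subseteq> topspace V"
    "\<And>S. open S \<Longrightarrow> openin V (k ` S)" using chart_facts[OF bspec[OF charts k(1)]] by blast+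
  have hpre: "h -` topspace V = UNIV" using hc(3) by auto
  have kpre: "k -` topspace V = UNIV" using kc(3) by auto
  have ha: "h a = x" using h(2) unfolding a_def by (simp add: f_inv_into_f)
  have kb: "k b = y" using k(2) unfolding b_def by (simp add: f_inv_into_f)
  have "Cr_on r (h -` topspace V) (f \<circ> h)" using assms(4) h(1) unfolding Cr_fun_on_def by blast
  then have "Cr_on r UNIV (f \<circ> h)" unfolding hpre .
  then obtain g' where g': "\<And>u. has_partial_deriv (f \<circ> h) i u (g' u)" "continuous_on UNIV g'"
    using C1_partial(2)[OF _ assms(2)] by blast
  have g'a: "g' a = d" using g'(1)[of a] hd(1) unfolding has_partial_deriv_def a_def
    by (metis DERIV_unique)
  have "Cr_on r (k -` topspace V) (f \<circ> k)" using assms(4) k(1) unfolding Cr_fun_on_def by blast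
  then have "Cr_on r UNIV (f \<circ> k)" unfolding kpre .
  then have "\<forall>j. \<exists>F'. (\<forall>w. has_partial_deriv (f \<circ> k) j w (F' w)) \<and> continuous_on UNIV F'"
    using C1_partial(2)[OF _ assms(2)] by blast
  from choice[OF this] obtain F' where "\<forall>j. (\<forall>w. has_partial_deriv (f \<circ> k) j w (F' j w)) \<and> continuous_on UNIV (F' j)"
    by blast
  then have F': "\<And>j w. has_partial_deriv (f \<circ> k) j w (F' j w)" "\<And>j. continuous_on UNIV (F' j)"
    by blast+
  have F'b: "F' j b = 0" for j
  proof (rule ccontr)
    assume "F' j b \<noteq> 0"
    then have "rank1_at A f y" unfolding rank1_at_def using k F'(1)[of j b] b_def by blast
    with ny show False by blast
  qed
  have ok: "openin V (range k)" using charts k(1) unfolding is_chart_def by blast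
  have "\<forall>j. \<exists>G W. Cr_fun_on A r (topspace V) G \<and> openin V W \<and> y \<in> W \<and> W \<subseteq> range k \<and> (\<forall>z\<in>W. G z = inv k z $ j)"
  proof
    fix j
    have "Cr_fun_on A r (range k) (\<lambda>z. inv k z $ j)"
      unfolding Cr_fun_on_def
    proof
      fix h' assume "h' \<in> A"
      then have "Cr_map_on r (h' -` range k) (transition h' k)" using trans k(1) by blast
      then show "Cr_on r (h' -` range k) ((\<lambda>z. inv k z $ j) \<circ> h')"
        unfolding Cr_map_on_def transition_def by (simp add: o_def)
    qed
    moreover have "\<forall>x\<in>topspace V. \<forall>U f. openin V U \<and> x \<in> U \<and> Cr_fun_on A r U f \<longrightarrow>
        (\<exists>f'. Cr_fun_on A r (topspace V) f' \<and>
              (\<exists>W. openin V W \<and> x \<in> W \<and> W \<subseteq> U \<and> (\<forall>z\<in>W. f' z = f z)))"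
      using assms(3) unfolding regular_structure_def .
    ultimately have "\<exists>f'. Cr_fun_on A r (topspace V) f' \<and>
              (\<exists>W. openin V W \<and> y \<in> W \<and> W \<subseteq> range k \<and> (\<forall>z\<in>W. f' z = inv k z $ j))"
      using assms(7) k(2) ok by blast
    then show "\<exists>G W. Cr_fun_on A r (topspace V) G \<and> openin V W \<and> y \<in> W \<and> W \<subseteq> range k \<and> (\<forall>z\<in>W. G z = inv k z $ j)"
      by blast
  qed
  then have "\<exists>G. \<forall>j. \<exists>W. Cr_fun_on A r (topspace V) (G j) \<and> openin V W \<and> y \<in> W \<and> W \<subseteq> range k \<and> (\<forall>z\<in>W. G j z = inv k z $ j)"
    by (rule choice)
  then obtain G where "\<forall>j. \<exists>W. Cr_fun_on A r (topspace V) (G j) \<and> openin V W \<and> y \<in> W \<and> W \<subseteq> range k \<and> (\<forall>z\<in>W. G j z = inv k z $ j)"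
    by blast
  from choice[OF this] obtain W where GW: "\<forall>j. Cr_fun_on A r (topspace V) (G j) \<and> openin V (W j) \<and> y \<in> W j \<and> W j \<subseteq> range k \<and> (\<forall>z\<in>W j. G j z = inv k z $ j)"
    by blast
  then have G: "\<And>j. Cr_fun_on A r (topspace V) (G j)" "\<And>j. openin V (W j)"
    "\<And>j. y \<in> W j" "\<And>j z. z \<in> W j \<Longrightarrow> G j z = inv k z $ j"
    by blast+
  define Wa where "Wa = (\<Inter>j. W j)"
  have Wa: "openin V Wa" unfolding Wa_def by (rule openin_INT2) (auto intro: G(2))
  have yWa: "y \<in> Wa" unfolding Wa_def using G(3) by blast
  have "\<forall>j. \<exists>P. (\<forall>u. has_partial_deriv (G j \<circ> h) i u (P u)) \<and> continuous_on UNIV P"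
  proof
    fix j
    have "Cr_on r (h -` topspace V) (G j \<circ> h)" using G(1)[of j] h(1) unfolding Cr_fun_on_def by blast
    then have "Cr_on r UNIV (G j \<circ> h)" unfolding hpre .
    then show "\<exists>P. (\<forall>u. has_partial_deriv (G j \<circ> h) i u (P u)) \<and> continuous_on UNIV P"
      using C1_partial(2)[OF _ assms(2)] by blast
  qed
  from choice[OF this] obtain P where "\<forall>j. (\<forall>u. has_partial_deriv (G j \<circ> h) i u (P j u)) \<and> continuous_on UNIV (P j)"
    by blast
  then have P: "\<And>j u. has_partial_deriv (G j \<circ> h) i u (P j u)" "\<And>j. continuous_on UNIV (P j)"
    by blast+
  have dpos: "\<bar>d\<bar> / 2 > 0" using hd(2) by simp
  have "eventually (\<lambda>u. \<bar>g' u - d\<bar> < \<bar>d\<bar> / 2) (at a)"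
    using cont_tendsto[OF g'(2), of a] dpos unfolding g'a tendsto_iff dist_real_def by blast
  moreover have "eventually (\<lambda>u. \<forall>j. \<bar>P j u - P j a\<bar> < 1) (at a)"
  proof (rule eventually_all_finite)
    fix j
    show "eventually (\<lambda>u. \<bar>P j u - P j a\<bar> < 1) (at a)"
      using cont_tendsto[OF P(2), of j a] unfolding tendsto_iff dist_real_def by simp
  qed
  ultimately have "eventually (\<lambda>u. \<bar>g' u - d\<bar> < \<bar>d\<bar> / 2 \<and> (\<forall>j. \<bar>P j u - P j a\<bar> < 1)) (at a)"
    by (rule eventually_conj)
  then obtain \<delta>1 where \<delta>1: "\<delta>1 > 0"
    "\<And>u. u \<noteq> a \<Longrightarrow> dist u a < \<delta>1 \<Longrightarrow> \<bar>g' u - d\<bar> < \<bar>d\<bar> / 2 \<and> (\<forall>j. \<bar>P j u - P j a\<bar> < 1)"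
    unfolding eventually_at by blast
  have near_a: "\<bar>g' u - d\<bar> < \<bar>d\<bar> / 2 \<and> (\<forall>j. \<bar>P j u - P j a\<bar> < 1)" if "dist u a < \<delta>1" for u
  proof (cases "u = a")
    case True then show ?thesis using g'a dpos by simp
  next
    case False then show ?thesis using \<delta>1(2) that by blast
  qed
  define M where "M = (\<Sum>j\<in>UNIV. \<bar>P j a\<bar> + 1)"
  have M0: "M \<ge> 0" unfolding M_def by (intro sum_nonneg) simp
  define \<epsilon> where "\<epsilon> = \<bar>d\<bar> / (2 * (M + 1))"
  have \<epsilon>pos: "\<epsilon> > 0" unfolding \<epsilon>_def using hd(2) M0 by simp
  have "eventually (\<lambda>w. \<forall>j. \<bar>F' j w\<bar> < \<epsilon>) (at b)"
  proof (rule eventually_all_finite)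
    fix j
    show "eventually (\<lambda>w. \<bar>F' j w\<bar> < \<epsilon>) (at b)"
      using cont_tendsto[OF F'(2), of j b] \<epsilon>pos unfolding tendsto_iff dist_real_def F'b by simp
  qed
  then obtain \<delta> where \<delta>: "\<delta> > 0" "\<And>w. w \<noteq> b \<Longrightarrow> dist w b < \<delta> \<Longrightarrow> \<forall>j. \<bar>F' j w\<bar> < \<epsilon>"
    unfolding eventually_at by blast
  have near_b: "\<bar>F' j w\<bar> \<le> \<epsilon>" if "dist w b < \<delta>" for j w
  proof (cases "w = b")
    case True then show ?thesis using F'b \<epsilon>pos by simp
  next
    case False then show ?thesis using \<delta>(2) that by (meson less_imp_le)
  qed
  define \<eta> where "\<eta> = \<delta> / real CARD('n)"
  have \<eta>pos: "\<eta> > 0" unfolding \<eta>_def using \<delta>(1) by simp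
  define Bx where "Bx = {w::real^'n. \<forall>l. \<bar>w$l - b$l\<bar> < \<eta>}"
  have Bx_ball: "dist w b < \<delta>" if "w \<in> Bx" for w
  proof -
    have "dist w b = norm (w - b)" by (simp add: dist_norm)
    also have "\<dots> \<le> (\<Sum>l\<in>UNIV. \<bar>(w - b)$l\<bar>)" by (rule norm_le_l1_cart)
    also have "\<dots> < (\<Sum>l\<in>(UNIV::'n set). \<eta>)"
      by (rule sum_strict_mono) (use that in \<open>auto simp: Bx_def\<close>)
    also have "\<dots> = \<delta>" unfolding \<eta>_def by simp
    finally show ?thesis .
  qed
  have Bx_box: "Bx = box (b - (\<chi> l. \<eta>)) (b + (\<chi> l. \<eta>))"
    unfolding Bx_def by (auto simp: mem_box_cart abs_less_iff algebra_simps)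
  have Bx_open: "open Bx" unfolding Bx_box by (rule open_box)
  have bBx: "b \<in> Bx" unfolding Bx_def using \<eta>pos by simp
  have Nx: "openin V (h ` ball a \<delta>1)" "x \<in> h ` ball a \<delta>1"
    using hc(4)[OF open_ball] ha \<delta>1(1) by auto
  have Ny: "openin V (Wa \<inter> k ` Bx)" "y \<in> Wa \<inter> k ` Bx"
    using openin_Int[OF Wa kc(4)[OF Bx_open]] yWa kb bBx by auto
  obtain z where z: "z \<in> h ` ball a \<delta>1" "z \<in> Wa \<inter> k ` Bx"
    using assms(8) Nx Ny unfolding not_separated_def by blast
  from z(1) obtain u where u0: "u \<in> ball a \<delta>1" "z = h u" by blast
  have u: "dist u a < \<delta>1" "h u \<in> Wa \<inter> k ` Bx"
    using u0 z(2) by (auto simp: dist_commute)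
  define Ov where "Ov = {v. h v \<in> Wa \<inter> k ` Bx}"
  have Oopen: "open Ov"
  proof -
    have "openin euclidean {v \<in> topspace euclidean. h v \<in> Wa \<inter> k ` Bx}"
      by (rule openin_continuous_map_preimage[OF hc(1) Ny(1)])
    moreover have "{v \<in> topspace euclidean. h v \<in> Wa \<inter> k ` Bx} = Ov" by (simp add: Ov_def)
    ultimately show ?thesis by (simp only: open_openin)
  qed
  have uO: "u \<in> Ov" using u(2) unfolding Ov_def by simp
  have key: "(f \<circ> h) v = (f \<circ> k) (inv k (h v)) \<and> inv k (h v) \<in> Bx \<and> (\<forall>j. (G j \<circ> h) v = inv k (h v) $ j)"
    if vO: "v \<in> Ov" for v
  proof -
    obtain w where w: "w \<in> Bx" "h v = k w" "h v \<in> Wa" using vO unfolding Ov_def by auto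
    have iw: "inv k (h v) = w" using w(2) kc(2) by (simp add: inv_f_f)
    show ?thesis using w iw G(4) unfolding Wa_def by auto
  qed
  have est: "\<bar>(f \<circ> h) v' - (f \<circ> h) v\<bar> \<le> \<epsilon> * (\<Sum>j\<in>UNIV. \<bar>(G j \<circ> h) v' - (G j \<circ> h) v\<bar>)"
    if "v \<in> Ov" "v' \<in> Ov" for v v'
  proof -
    have bd: "\<bar>F' j w\<bar> \<le> \<epsilon>" if "\<forall>l. \<bar>w$l - b$l\<bar> < \<eta>" for j w
      using near_b Bx_ball that unfolding Bx_def by blast
    have "inv k (h v) \<in> Bx" "inv k (h v') \<in> Bx" using key that by blast+
    then have "\<bar>(f \<circ> k) (inv k (h v')) - (f \<circ> k) (inv k (h v))\<bar>
       \<le> \<epsilon> * (\<Sum>j\<in>UNIV. \<bar>inv k (h v') $ j - inv k (h v) $ j\<bar>)"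
      using box_est[OF F'(1) bd] unfolding Bx_def by blast
    then show ?thesis using key[OF that(1)] key[OF that(2)] by simp
  qed
  have lim: "((\<lambda>t. u + t *\<^sub>R axis i 1) \<longlongrightarrow> u) (at 0)"
  proof -
    have "((\<lambda>t. u + t *\<^sub>R axis i 1) \<longlongrightarrow> u + 0 *\<^sub>R axis i 1) (at 0)"
      by (intro tendsto_intros)
    then show ?thesis by simp
  qed
  have evO: "eventually (\<lambda>t. u + t *\<^sub>R axis i 1 \<in> Ov) (at 0)"
    by (rule topological_tendstoD[OF lim Oopen uO])
  have bound: "\<bar>g' u\<bar> \<le> \<epsilon> * (\<Sum>j\<in>UNIV. \<bar>P j u\<bar>)"
  proof (rule deriv_est[where \<phi> = "\<lambda>t. (f \<circ> h) (u + t *\<^sub>R axis i 1)"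
        and \<psi> = "\<lambda>j t. (G j \<circ> h) (u + t *\<^sub>R axis i 1)"])
    show "((\<lambda>t. (f \<circ> h) (u + t *\<^sub>R axis i 1)) has_real_derivative g' u) (at 0)"
      using g'(1)[of u] unfolding has_partial_deriv_def .
    fix j show "((\<lambda>t. (G j \<circ> h) (u + t *\<^sub>R axis i 1)) has_real_derivative P j u) (at 0)"
      using P(1)[of j u] unfolding has_partial_deriv_def .
  next
    show "eventually (\<lambda>t. \<bar>(f \<circ> h) (u + t *\<^sub>R axis i 1) - (f \<circ> h) (u + 0 *\<^sub>R axis i 1)\<bar>
      \<le> \<epsilon> * (\<Sum>j\<in>UNIV. \<bar>(G j \<circ> h) (u + t *\<^sub>R axis i 1) - (G j \<circ> h) (u + 0 *\<^sub>R axis i 1)\<bar>)) (at 0)"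
      using evO by eventually_elim (use est uO in simp)
  qed
  have "(\<Sum>j\<in>UNIV. \<bar>P j u\<bar>) \<le> M"
    unfolding M_def
  proof (intro sum_mono)
    fix j
    have "\<bar>P j u - P j a\<bar> < 1" using near_a[OF u(1)] by blast
    then show "\<bar>P j u\<bar> \<le> \<bar>P j a\<bar> + 1" by (auto simp: abs_le_iff abs_less_iff)
  qed
  then have "\<bar>g' u\<bar> \<le> \<epsilon> * M" using bound \<epsilon>pos
    by (meson mult_left_mono less_imp_le order_trans)
  moreover have "\<epsilon> * M < \<bar>d\<bar> / 2"
  proof -
    have "\<epsilon> * M = \<bar>d\<bar> / 2 * (M / (M + 1))" unfolding \<epsilon>_def using M0 by (simp add: field_simps)
    also have "\<dots> < \<bar>d\<bar> / 2 * 1" using M0 dpos by (intro mult_strict_left_mono) auto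
    finally show ?thesis by simp
  qed
  moreover have "\<bar>g' u\<bar> > \<bar>d\<bar> / 2" using near_a[OF u(1)] by linarith
  ultimately show False by linarith
qed


end
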